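(* Let $c_0>0$, $\alpha_0>0$, and let $\gamma>0$ be a real number that is not an odd integer. Let $\tilde\alpha_0=\alpha_0/\cos(\frac{\pi}{2}\gamma)$ and $\alpha^*_{pl}(\omega)=\tilde\alpha_0(-i\omega)^\gamma$ for $\omega\in\mathbb{R}$. Then the function $K(\vec x,t)=\frac{1}{\sqrt{2\pi}}\mathcal{F}^{-1}\{e^{-\alpha^*_{pl}(\cdot)|\vec x|}\}(t)$ is causal (i.e. $t\mapsto K(\vec x,t)$ vanishes for $t<0$ for every $\vec x\in\mathbb{R}^3$) if and only if $\gamma\in(0,1)$.
   Context: Fourier convention: $\mathcal{F}^{-1}\{\hat f\}(t)=\frac{1}{\sqrt{2\pi}}\int_{\mathbb{R}}e^{-i\omega t}\hat f(\omega)\,d\omega$ (tempered distributions). Complex powers are principal: for $w=re^{i\phi}$, $\phi\in(-\pi,\pi)$, $w^\gamma=e^{\gamma(\log r+i\phi)}$; thus $\alpha^*_{pl}(\omega)=\tilde\alpha_0|\omega|^\gamma(\cos(\frac{\pi}{2}\gamma)-i\,\mathrm{sgn}(\omega)\sin(\frac{\pi}{2}\gamma))$. *)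

theory Defs
  imports "HOL-Analysis.Analysis"
begin

definition alpha_tilde :: "real \<Rightarrow> real \<Rightarrow> real" where
  "alpha_tilde \<alpha>0 \<gamma> = \<alpha>0 / cos (pi / 2 * \<gamma>)"

text \<open>Power-law attenuation alpha*_pl(omega) = tilde alpha_0 (-i omega)^gamma, principal power
  (Isabelle's complex powr uses the principal branch of Ln; 0 powr z = 0).\<close>
definition alpha_pl :: "real \<Rightarrow> real \<Rightarrow> real \<Rightarrow> complex" where
  "alpha_pl \<alpha>0 \<gamma> \<omega> =
     complex_of_real (alpha_tilde \<alpha>0 \<gamma>) * ((- \<i> * complex_of_real \<omega>) powr complex_of_real \<gamma>)"

definition inv_fourier :: "(real \<Rightarrow> complex) \<Rightarrow> real \<Rightarrow> complex" where
  "inv_fourier f t = complex_of_real (1 / sqrt (2 * pi)) *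
     (LINT \<omega>|lborel. exp (- \<i> * complex_of_real (\<omega> * t)) * f \<omega>)"

definition kernel_K :: "real \<Rightarrow> real \<Rightarrow> real^3 \<Rightarrow> real \<Rightarrow> complex" where
  "kernel_K \<alpha>0 \<gamma> x t = complex_of_real (1 / sqrt (2 * pi)) *
     inv_fourier (\<lambda>\<omega>. exp (- alpha_pl \<alpha>0 \<gamma> \<omega> * complex_of_real (norm x))) t"

end

theory Submission imports Defs "HOL-Complex_Analysis.Complex_Analysis" "HOL-Probability.Sinc_Integral" "HOL-Real_Asymp.Real_Asymp" begin


lemma ray_contour:
  fixes h :: "complex \<Rightarrow> complex" and u :: complex
  assumes R: "R > 0" and I: "((\<lambda>\<rho>. h (of_real \<rho> * u)) has_integral I) {0..R}"
  shows "(h has_contour_integral (u * I)) (linepath 0 (of_real R * u))"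
proof -
  have 1: "((\<lambda>x. h (of_real (R * x) * u)) has_integral (1/\<bar>R\<bar>) *\<^sub>R I) ((\<lambda>x. x / R) ` {0..R})"
    using has_integral_stretch_real[OF I, of R] R by simp
  have 2: "(\<lambda>x. x / R) ` {0..R} = {0..1}"
  proof
    show "(\<lambda>x. x / R) ` {0..R} \<subseteq> {0..1}" using R by auto
    show "{0..1} \<subseteq> (\<lambda>x. x / R) ` {0..R}"
    proof
      fix x :: real assume "x \<in> {0..1}"
      then have "x * R \<in> {0..R}" "x = (x * R) / R" using R by (auto simp: mult_le_cancel_right1)
      then show "x \<in> (\<lambda>x. x / R) ` {0..R}" by blast
    qed
  qed
  have 3: "((\<lambda>x. h (of_real (R * x) * u) * (of_real R * u)) has_integral ((1/\<bar>R\<bar>) *\<^sub>R I) * (of_real R * u)) {0..1}"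
    using has_integral_mult_left[OF 1[unfolded 2]] by simp
  have 4: "((1/\<bar>R\<bar>) *\<^sub>R I) * (of_real R * u) = u * I"
    using R by (simp add: scaleR_conv_of_real field_simps)
  show ?thesis
    unfolding has_contour_integral_linepath
    using 3 unfolding 4 by (simp add: linepath_def scaleR_conv_of_real mult.assoc mult.commute mult.left_commute)
qed

lemma sector:
  fixes h :: "complex \<Rightarrow> complex" and S :: "complex set" and \<psi> :: real and B :: "real \<Rightarrow> real"
  assumes S: "convex S"
    and Sin: "\<And>\<rho> \<theta>. 0 \<le> \<rho> \<Longrightarrow> \<theta> \<in> closed_segment 0 \<psi> \<Longrightarrow> of_real \<rho> * cis \<theta> \<in> S"
    and cont: "continuous_on S h"
    and diff: "\<And>z. z \<in> S \<Longrightarrow> z \<noteq> 0 \<Longrightarrow> h field_differentiable at z"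
    and bound: "\<And>\<rho> \<theta>. 0 \<le> \<rho> \<Longrightarrow> \<theta> \<in> closed_segment 0 \<psi> \<Longrightarrow> norm (h (of_real \<rho> * cis \<theta>)) \<le> B \<rho>"
    and Blim: "((\<lambda>R. R * B R) \<longlongrightarrow> 0) at_top"
    and int1: "set_integrable lborel {0..} (\<lambda>\<rho>. h (of_real \<rho>))"
    and int2: "set_integrable lborel {0..} (\<lambda>\<rho>. h (of_real \<rho> * cis \<psi>))"
  shows "(LBINT \<rho>:{0..}. h (of_real \<rho>)) = cis \<psi> * (LBINT \<rho>:{0..}. h (of_real \<rho> * cis \<psi>))"
proof -
  define I1 where "I1 R = (LBINT \<rho>:{0..R}. h (of_real \<rho>))" for R
  define I2 where "I2 R = (LBINT \<rho>:{0..R}. h (of_real \<rho> * cis \<psi>))" for R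
  have S0: "0 \<in> S" using Sin[of 0 0] by simp
  have SR: "of_real R \<in> S" if "R \<ge> 0" for R using Sin[of R 0] that by simp
  have SRp: "of_real R * cis \<psi> \<in> S" if "R \<ge> 0" for R using Sin[of R \<psi>] that by simp
  have key: "I1 R - cis \<psi> * I2 R + contour_integral (part_circlepath 0 R 0 \<psi>) h = 0" if R: "R > 0" for R
  proof -
    have "set_integrable lborel {0..R} (\<lambda>\<rho>. h (of_real \<rho>))"
      by (rule set_integrable_subset[OF int1]) auto
    note X = set_borel_integral_eq_integral[OF this]
    have "((\<lambda>\<rho>. h (of_real \<rho> * 1)) has_integral I1 R) {0..R}"
      unfolding I1_def X(2) using integrable_integral[OF X(1)] by simp
    from ray_contour[OF R this] have h1: "(h has_contour_integral I1 R) (linepath 0 (of_real R))" by simp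
    have "set_integrable lborel {0..R} (\<lambda>\<rho>. h (of_real \<rho> * cis \<psi>))"
      by (rule set_integrable_subset[OF int2]) auto
    note Y = set_borel_integral_eq_integral[OF this]
    have "((\<lambda>\<rho>. h (of_real \<rho> * cis \<psi>)) has_integral I2 R) {0..R}"
      unfolding I2_def Y(2) using integrable_integral[OF Y(1)] by simp
    from ray_contour[OF R this] have "(h has_contour_integral (cis \<psi> * I2 R)) (linepath 0 (of_real R * cis \<psi>))" .
    from has_contour_integral_reversepath[OF valid_path_linepath this] 
    have h3: "(h has_contour_integral - (cis \<psi> * I2 R)) (linepath (of_real R * cis \<psi>) 0)" by simp
    have arcS: "path_image (part_circlepath 0 R 0 \<psi>) \<subseteq> S"
      unfolding path_image_part_circlepath' using Sin R by auto
    have "h contour_integrable_on part_circlepath 0 R 0 \<psi>"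
      by (rule contour_integrable_continuous_part_circlepath[OF continuous_on_subset[OF cont arcS]])
    then have h2: "(h has_contour_integral contour_integral (part_circlepath 0 R 0 \<psi>) h) (part_circlepath 0 R 0 \<psi>)"
      by (rule has_contour_integral_integral)
    define g where "g = linepath 0 (of_real R) +++ part_circlepath 0 R 0 \<psi> +++ linepath (of_real R * cis \<psi>) 0"
    have ends: "pathfinish (part_circlepath 0 R 0 \<psi>) = of_real R * cis \<psi>" 
      by (simp add: cis_conv_exp mult.commute)
    have "(h has_contour_integral (I1 R + (contour_integral (part_circlepath 0 R 0 \<psi>) h + - (cis \<psi> * I2 R)))) g"
      unfolding g_def
      by (intro has_contour_integral_join h1 h2 h3 valid_path_join) (simp_all add: ends cis_conv_exp)
    moreover have "(h has_contour_integral 0) g"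
    proof (rule Cauchy_theorem_convex[where K="{0}"])
      show "path_image g \<subseteq> S" unfolding g_def
        using arcS closed_segment_subset[OF S0 SR[of R] S] closed_segment_subset[OF SRp[of R] S0 S] R
        by (simp add: path_image_join ends cis_conv_exp)
      show "valid_path g" unfolding g_def by (intro valid_path_join) (simp_all add: ends cis_conv_exp)
      show "pathfinish g = pathstart g" unfolding g_def by simp
      show "continuous_on S h" by (rule cont)
      show "convex S" by (rule S)
      show "finite {0::complex}" by simp
      fix x assume "x \<in> interior S - {0}"
      then show "h field_differentiable at x" using diff interior_subset by blast
    qed
    ultimately have "I1 R + (contour_integral (part_circlepath 0 R 0 \<psi>) h + - (cis \<psi> * I2 R)) = 0"
      by (rule has_contour_integral_unique)
    then show ?thesis by (simp add: algebra_simps)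
  qed
  have L1: "(I1 \<longlongrightarrow> (LBINT \<rho>:{0..}. h (of_real \<rho>))) at_top"
    unfolding I1_def by (rule tendsto_set_lebesgue_integral_at_top[OF _ int1]) auto
  have L2: "(I2 \<longlongrightarrow> (LBINT \<rho>:{0..}. h (of_real \<rho> * cis \<psi>))) at_top"
    unfolding I2_def by (rule tendsto_set_lebesgue_integral_at_top[OF _ int2]) auto
  have arc: "((\<lambda>R. contour_integral (part_circlepath 0 R 0 \<psi>) h) \<longlongrightarrow> 0) at_top"
  proof (rule Lim_null_comparison)
    show "\<forall>\<^sub>F R in at_top. norm (contour_integral (part_circlepath 0 R 0 \<psi>) h) \<le> R * B R * \<bar>\<psi>\<bar>"
    proof (rule eventually_mono[OF eventually_gt_at_top[of 0]])
      fix R :: real assume R: "R > 0"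
      have arcS: "path_image (part_circlepath 0 R 0 \<psi>) \<subseteq> S"
        unfolding path_image_part_circlepath' using Sin R by auto
      have "h contour_integrable_on part_circlepath 0 R 0 \<psi>"
        by (rule contour_integrable_continuous_part_circlepath[OF continuous_on_subset[OF cont arcS]])
      moreover have "0 \<le> B R" using bound[of R 0] R by (smt (verit) norm_ge_zero ends_in_segment(1))
      moreover have "norm (h x) \<le> B R" if "x \<in> path_image (part_circlepath 0 R 0 \<psi>)" for x
        using that R bound unfolding path_image_part_circlepath' by auto
      ultimately have "norm (contour_integral (part_circlepath 0 R 0 \<psi>) h) \<le> B R * R * \<bar>\<psi> - 0\<bar>"
        using R by (intro contour_integral_bound_part_circlepath) auto
      then show "norm (contour_integral (part_circlepath 0 R 0 \<psi>) h) \<le> R * B R * \<bar>\<psi>\<bar>"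
        by (simp add: mult_ac)
    qed
    show "((\<lambda>R. R * B R * \<bar>\<psi>\<bar>) \<longlongrightarrow> 0) at_top"
      using tendsto_mult_right_zero[OF Blim, of "\<bar>\<psi>\<bar>"] by (simp add: mult_ac)
  qed
  have "((\<lambda>R. I1 R - cis \<psi> * I2 R + contour_integral (part_circlepath 0 R 0 \<psi>) h) \<longlongrightarrow>
        (LBINT \<rho>:{0..}. h (of_real \<rho>)) - cis \<psi> * (LBINT \<rho>:{0..}. h (of_real \<rho> * cis \<psi>)) + 0) at_top"
    by (intro tendsto_intros L1 L2 arc)
  moreover have "((\<lambda>R. I1 R - cis \<psi> * I2 R + contour_integral (part_circlepath 0 R 0 \<psi>) h) \<longlongrightarrow> 0) at_top"
    by (rule tendsto_eventually, rule eventually_mono[OF eventually_gt_at_top[of 0]]) (rule key)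
  ultimately have "(LBINT \<rho>:{0..}. h (of_real \<rho>)) - cis \<psi> * (LBINT \<rho>:{0..}. h (of_real \<rho> * cis \<psi>)) + 0 = 0"
    by (rule tendsto_unique[OF trivial_limit_at_top_linorder])
  then show ?thesis by simp
qed



lemma maj_generic:
  fixes f :: "real \<Rightarrow> real"
  assumes cont: "continuous_on {0..} f" and lim: "((\<lambda>x. (1 + x^2) * f x) \<longlongrightarrow> 0) at_top"
  shows "\<exists>K. \<forall>x\<ge>0. \<bar>f x\<bar> \<le> K * inverse (1 + x^2)"
proof -
  from lim have "\<forall>\<^sub>F x in at_top. \<bar>(1 + x^2) * f x\<bar> < 1"
    by (rule order_tendstoD(2)[OF tendsto_rabs_zero]) simp
  then obtain X where X: "\<And>x. x \<ge> X \<Longrightarrow> \<bar>(1 + x^2) * f x\<bar> < 1"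
    by (auto simp: eventually_at_top_linorder)
  have "compact ((\<lambda>x. (1 + x^2) * f x) ` {0..max 0 X})"
    by (intro compact_continuous_image continuous_intros continuous_on_subset[OF cont]) auto
  then obtain M where M: "\<And>y. y \<in> (\<lambda>x. (1 + x^2) * f x) ` {0..max 0 X} \<Longrightarrow> norm y \<le> M"
    using compact_imp_bounded bounded_iff by metis
  show ?thesis
  proof (intro exI allI impI)
    fix x :: real assume x: "x \<ge> 0"
    have "\<bar>(1 + x^2) * f x\<bar> \<le> max 1 M"
    proof (cases "x \<ge> X")
      case True then show ?thesis using X[of x] by simp
    next
      case False then show ?thesis using M[of "(1 + x^2) * f x"] x by force
    qed
    moreover have "(1 + x^2) > 0" by (simp add: add_pos_nonneg)
    ultimately show "\<bar>f x\<bar> \<le> max 1 M * inverse (1 + x^2)"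
      by (simp add: abs_mult field_simps)
  qed
qed

lemma maj_exp:
  fixes c g :: real
  assumes "c > 0" "g > 0"
  shows "\<exists>K. \<forall>x. exp (- c * \<bar>x\<bar> powr g) \<le> K * inverse (1 + x^2)"
proof -
  have "\<exists>K. \<forall>x\<ge>0. \<bar>exp (- c * x powr g)\<bar> \<le> K * inverse (1 + x^2)"
  proof (rule maj_generic)
    show "continuous_on {0..} (\<lambda>x. exp (- c * x powr g))"
      using assms by (intro continuous_intros continuous_on_powr') auto
    show "((\<lambda>x. (1 + x\<^sup>2) * exp (- c * x powr g)) \<longlongrightarrow> 0) at_top"
      using assms by real_asymp
  qed
  then obtain K where K: "\<And>x. x \<ge> 0 \<Longrightarrow> \<bar>exp (- c * x powr g)\<bar> \<le> K * inverse (1 + x^2)" by blast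
  show ?thesis
  proof (intro exI allI)
    fix x :: real show "exp (- c * \<bar>x\<bar> powr g) \<le> K * inverse (1 + x^2)"
      using K[of "\<bar>x\<bar>"] by simp
  qed
qed

lemma maj_exp1:
  fixes c g :: real
  assumes "c > 0" "g > 0"
  shows "\<exists>K. \<forall>x. \<bar>x\<bar> * exp (- c * \<bar>x\<bar> powr g) \<le> K * inverse (1 + x^2)"
proof -
  have "\<exists>K. \<forall>x\<ge>0. \<bar>x * exp (- c * x powr g)\<bar> \<le> K * inverse (1 + x^2)"
  proof (rule maj_generic)
    show "continuous_on {0..} (\<lambda>x. x * exp (- c * x powr g))"
      using assms by (intro continuous_intros continuous_on_powr') auto
    show "((\<lambda>x. (1 + x\<^sup>2) * (x * exp (- c * x powr g))) \<longlongrightarrow> 0) at_top"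
      using assms by real_asymp
  qed
  then obtain K where K: "\<And>x. x \<ge> 0 \<Longrightarrow> \<bar>x * exp (- c * x powr g)\<bar> \<le> K * inverse (1 + x^2)" by blast
  show ?thesis
  proof (intro exI allI)
    fix x :: real show "\<bar>x\<bar> * exp (- c * \<bar>x\<bar> powr g) \<le> K * inverse (1 + x^2)"
      using K[of "\<bar>x\<bar>"] by (simp add: abs_mult)
  qed
qed

lemma integrable_inv_sq: "integrable lborel (\<lambda>x::real. inverse (1 + x^2))"
  using integrable_inverse_1_plus_square by (simp add: set_integrable_def einterval_def)

lemma integrable_exp_powr:
  fixes c g :: real
  assumes "c > 0" "g > 0"
  shows "integrable lborel (\<lambda>x. exp (- c * \<bar>x\<bar> powr g))"
proof -
  obtain K where K: "\<And>x. exp (- c * \<bar>x\<bar> powr g) \<le> K * inverse (1 + x^2)" using maj_exp[OF assms] by blast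
  show ?thesis
  proof (rule Bochner_Integration.integrable_bound[OF integrable_mult_right[OF integrable_inv_sq, of K]])
    show "(\<lambda>x. exp (- c * \<bar>x\<bar> powr g)) \<in> borel_measurable lborel"
      unfolding measurable_lborel2 by (intro borel_measurable_continuous_onI continuous_intros continuous_on_powr') (use assms in auto)
    show "AE x in lborel. norm (exp (- c * \<bar>x\<bar> powr g)) \<le> norm (K * inverse (1 + x^2))"
      using K by (auto intro!: AE_I2 order_trans[OF _ abs_ge_self])
  qed
qed

lemma integrable_exp_powr1:
  fixes c g :: real
  assumes "c > 0" "g > 0"
  shows "integrable lborel (\<lambda>x. \<bar>x\<bar> * exp (- c * \<bar>x\<bar> powr g))"
proof -
  obtain K where K: "\<And>x. \<bar>x\<bar> * exp (- c * \<bar>x\<bar> powr g) \<le> K * inverse (1 + x^2)" using maj_exp1[OF assms] by blast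
  show ?thesis
  proof (rule Bochner_Integration.integrable_bound[OF integrable_mult_right[OF integrable_inv_sq, of K]])
    show "(\<lambda>x. \<bar>x\<bar> * exp (- c * \<bar>x\<bar> powr g)) \<in> borel_measurable lborel"
      unfolding measurable_lborel2 by (intro borel_measurable_continuous_onI continuous_intros continuous_on_powr') (use assms in auto)
    show "AE x in lborel. norm (\<bar>x\<bar> * exp (- c * \<bar>x\<bar> powr g)) \<le> norm (K * inverse (1 + x^2))"
      using K by (auto intro!: AE_I2 order_trans[OF _ abs_ge_self])
  qed
qed



lemma polar_powr:
  fixes \<rho> \<phi> g :: real
  assumes "\<rho> > 0" "-pi < \<phi>" "\<phi> \<le> pi"
  shows "(of_real \<rho> * cis \<phi>) powr (of_real g) = of_real (\<rho> powr g) * cis (g * \<phi>)"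
proof -
  have e: "of_real \<rho> * cis \<phi> = exp (of_real (ln \<rho>) + \<i> * of_real \<phi>)"
    using assms by (simp add: exp_add cis_conv_exp exp_of_real)
  have l: "Ln (of_real \<rho> * cis \<phi>) = of_real (ln \<rho>) + \<i> * of_real \<phi>"
    unfolding e using assms by (subst Ln_exp) auto
  have nz: "of_real \<rho> * cis \<phi> \<noteq> 0" using assms by simp
  have "(of_real \<rho> * cis \<phi>) powr (of_real g) = exp (of_real g * (of_real (ln \<rho>) + \<i> * of_real \<phi>))"
    using nz l by (simp add: powr_def)
  also have "\<dots> = exp (of_real (g * ln \<rho>)) * exp (\<i> * of_real (g * \<phi>))"
    by (simp add: exp_add[symmetric] algebra_simps)
  also have "\<dots> = of_real (\<rho> powr g) * cis (g * \<phi>)"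
    using assms by (simp add: exp_of_real[symmetric] cis_conv_exp powr_def)
  finally show ?thesis .
qed

lemma cis_minus_pi2: "- \<i> = cis (- pi / 2)" and cis_pi2: "\<i> = cis (pi/2)"
  by (simp_all add: complex_eq_iff)

lemma split_real:
  fixes F :: "real \<Rightarrow> complex"
  assumes int: "integrable lborel F"
  shows "integral\<^sup>L lborel F = (LBINT x:{0..}. F x) + (LBINT x:{0..}. F (- x))"
proof -
  have Fm[measurable]: "F \<in> borel_measurable borel" using int by auto
  have si: "set_integrable lborel A F" if "A \<in> sets lborel" for A
    unfolding set_integrable_def using that int by (rule integrable_mult_indicator)
  have "(LBINT x:({0..} \<union> {..<0}). F x) = (LBINT x:{0..}. F x) + (LBINT x:{..<0}. F x)"
    by (rule set_integral_Un) (auto intro!: si)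
  moreover have "({0..} \<union> {..<0}) = (UNIV :: real set)" by auto
  ultimately have 1: "integral\<^sup>L lborel F = (LBINT x:{0..}. F x) + (LBINT x:{..<0}. F x)"
    by (simp add: set_lebesgue_integral_def)
  have 2: "(LBINT x:{..<0}. F x) = (LBINT x:{0<..}. F (- x))"
    by (subst set_integral_reflect) (simp add: lessThan_def greaterThan_def)
  have 3: "(LBINT x:{0<..}. F (- x)) = (LBINT x:{0..}. F (- x))"
  proof (rule set_integral_cong_set)
    show "set_borel_measurable lborel {0..} (\<lambda>x. F (- x))"
      unfolding set_borel_measurable_def by measurable
    show "set_borel_measurable lborel {0<..} (\<lambda>x. F (- x))"
      unfolding set_borel_measurable_def by measurable
    show "AE x in lborel. ((x::real) \<in> {0..}) = (x \<in> {0<..})"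
      using AE_lborel_singleton[of "0::real"] by (rule eventually_mono) auto
  qed
  show ?thesis using 1 2 3 by simp
qed




lemma cos_gamma_ne0:
  assumes "\<not> (\<exists>k::int. \<gamma> = 2 * of_int k + 1)"
  shows "cos (pi / 2 * \<gamma>) \<noteq> 0"
proof
  assume "cos (pi / 2 * \<gamma>) = 0"
  then obtain i :: int where i: "odd i" "pi / 2 * \<gamma> = of_int i * (pi / 2)"
    unfolding cos_zero_iff_int by blast
  then have "\<gamma> = of_int i" by simp
  moreover obtain k where "i = 2 * k + 1" using i(1) by (auto elim: oddE)
  ultimately show False using assms by simp
qed

lemma alpha_pl_pos:
  assumes "\<rho> > 0"
  shows "alpha_pl \<alpha>0 \<gamma> \<rho> = of_real (alpha_tilde \<alpha>0 \<gamma> * \<rho> powr \<gamma>) * cis (\<gamma> * (- pi / 2))"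
proof -
  have "- \<i> * complex_of_real \<rho> = of_real \<rho> * cis (- pi / 2)"
    by (simp add: cis_minus_pi2[symmetric])
  moreover have "(of_real \<rho> * cis (- pi / 2)) powr (of_real \<gamma>) = of_real (\<rho> powr \<gamma>) * cis (\<gamma> * (- pi / 2))"
    by (rule polar_powr) (use assms pi_gt_zero in linarith)+
  ultimately show ?thesis unfolding alpha_pl_def
    by (simp only:) (simp add: mult.assoc)
qed

lemma alpha_pl_neg:
  assumes "\<rho> > 0"
  shows "alpha_pl \<alpha>0 \<gamma> (- \<rho>) = of_real (alpha_tilde \<alpha>0 \<gamma> * \<rho> powr \<gamma>) * cis (\<gamma> * (pi / 2))"
proof -
  have "- \<i> * complex_of_real (- \<rho>) = of_real \<rho> * cis (pi / 2)"
    by (simp add: cis_pi2[symmetric])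
  then show ?thesis unfolding alpha_pl_def using assms polar_powr[of \<rho> "pi / 2" \<gamma>]
    by (simp only:) (simp add: mult.assoc)
qed

lemma alpha_pl_0: "alpha_pl \<alpha>0 \<gamma> 0 = 0"
  by (simp add: alpha_pl_def)

lemma norm_exp_alpha:
  assumes c: "cos (pi / 2 * \<gamma>) \<noteq> 0"
  shows "norm (exp (- alpha_pl \<alpha>0 \<gamma> \<omega> * complex_of_real r)) = exp (- (\<alpha>0 * r) * \<bar>\<omega>\<bar> powr \<gamma>)"
proof -
  have key: "alpha_tilde \<alpha>0 \<gamma> * cos (\<gamma> * (pi / 2)) = \<alpha>0"
    using c unfolding alpha_tilde_def by (simp add: mult.commute)
  consider "\<omega> > 0" | "\<omega> < 0" | "\<omega> = 0" by linarith
  then show ?thesis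
  proof cases
    case 1
    then show ?thesis unfolding norm_exp_eq_Re using key
      by (simp add: alpha_pl_pos Re_exp algebra_simps)
  next
    case 2
    define \<rho> where "\<rho> = - \<omega>"
    then have "\<omega> = - \<rho>" "\<rho> > 0" using 2 by auto
    then show ?thesis unfolding norm_exp_eq_Re using key
      by (simp add: alpha_pl_neg Re_exp algebra_simps)
  next
    case 3
    then show ?thesis by (simp add: alpha_pl_0)
  qed
qed




lemma dir1:
  fixes \<alpha>0 \<gamma> r t :: real
  assumes a0: "\<alpha>0 > 0" and g0: "0 < \<gamma>" and g1: "\<gamma> < 1" and r: "r > 0" and t: "t < 0"
  shows "(LINT \<omega>|lborel. exp (- \<i> * complex_of_real (\<omega> * t)) * exp (- alpha_pl \<alpha>0 \<gamma> \<omega> * complex_of_real r)) = 0"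
proof -
  define a where "a = alpha_tilde \<alpha>0 \<gamma>"
  have "pi / 2 * \<gamma> < pi / 2 * 1" by (rule mult_strict_left_mono) (use g1 pi_gt_zero in auto)
  moreover have "pi / 2 * \<gamma> > 0" using g0 pi_gt_zero by simp
  ultimately have cpos: "cos (pi / 2 * \<gamma>) > 0" by (intro cos_gt_zero_pi) linarith+
  then have cne: "cos (pi / 2 * \<gamma>) \<noteq> 0" by simp
  have apos: "a > 0" unfolding a_def alpha_tilde_def using a0 cpos by simp
  have key: "a * cos (\<gamma> * (pi / 2)) = \<alpha>0"
    using cne unfolding a_def alpha_tilde_def by (simp add: mult.commute)
  define F where "F \<omega> = exp (- \<i> * complex_of_real (\<omega> * t)) * exp (- alpha_pl \<alpha>0 \<gamma> \<omega> * complex_of_real r)" for \<omega>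
  define h where "h z = exp (- \<i> * (z * of_real t)) * exp (- (of_real a * (- \<i> * z) powr of_real \<gamma>) * of_real r)" for z
  have hF: "h (of_real \<omega>) = F \<omega>" for \<omega> unfolding h_def F_def alpha_pl_def a_def by simp
  have normF: "norm (F \<omega>) = exp (- (\<alpha>0 * r) * \<bar>\<omega>\<bar> powr \<gamma>)" for \<omega>
    unfolding F_def norm_mult norm_exp_alpha[OF cne] by (simp add: norm_exp_eq_Re)
  have Fcont: "continuous_on UNIV F"
    unfolding F_def alpha_pl_def by (intro continuous_intros continuous_on_powr_complex) (auto simp: g0)
  have intF: "integrable lborel F"
  proof (rule Bochner_Integration.integrable_bound[OF integrable_exp_powr[of "\<alpha>0 * r" \<gamma>]])
    show "F \<in> borel_measurable lborel" unfolding measurable_lborel2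
      by (rule borel_measurable_continuous_onI[OF Fcont])
    show "AE x in lborel. norm (F x) \<le> norm (exp (- (\<alpha>0 * r) * \<bar>x\<bar> powr \<gamma>))"
      by (intro AE_I2) (simp add: normF)
  qed (use a0 r g0 in auto)
  have intFm: "integrable lborel (\<lambda>x. F (- x))"
    using lborel_integrable_real_affine_iff[of "-1" F 0] intF by simp
  have split: "integral\<^sup>L lborel F = (LBINT x:{0..}. F x) + (LBINT x:{0..}. F (- x))"
    by (rule split_real[OF intF])
  have sec: "(LBINT \<rho>:{0..}. h (of_real \<rho>)) = cis pi * (LBINT \<rho>:{0..}. h (of_real \<rho> * cis pi))"
  proof (rule sector[where S="{z. Im z \<ge> 0}" and B="\<lambda>\<rho>. exp (- (\<alpha>0 * r) * \<rho> powr \<gamma>)"])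
    show "convex {z. Im z \<ge> 0}" by (rule convex_halfspace_Im_ge)
    show "of_real \<rho> * cis \<theta> \<in> {z. 0 \<le> Im z}" if "0 \<le> \<rho>" "\<theta> \<in> closed_segment 0 pi" for \<rho> \<theta>
      using that by (auto simp: closed_segment_eq_real_ivl intro!: mult_nonneg_nonneg sin_ge_zero)
    show "continuous_on {z. 0 \<le> Im z} h" unfolding h_def
      by (intro continuous_intros continuous_on_powr_complex) (auto simp: g0)
    show "h field_differentiable at z" if "z \<in> {z. 0 \<le> Im z}" "z \<noteq> 0" for z
    proof -
      have "- \<i> * z \<notin> \<real>\<^sub>\<le>\<^sub>0" using that by (auto simp: complex_nonpos_Reals_iff complex_eq_iff)
      then have "h analytic_on {z}" unfolding h_def by (intro analytic_intros) auto
      then show ?thesis by (rule analytic_on_imp_differentiable_at) simp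
    qed
    show "norm (h (of_real \<rho> * cis \<theta>)) \<le> exp (- (\<alpha>0 * r) * \<rho> powr \<gamma>)"
      if \<rho>: "0 \<le> \<rho>" and \<theta>: "\<theta> \<in> closed_segment 0 pi" for \<rho> \<theta>
    proof (cases "\<rho> = 0")
      case True then show ?thesis by (simp add: h_def)
    next
      case False
      with \<rho> have \<rho>p: "\<rho> > 0" by simp
      have \<theta>': "0 \<le> \<theta>" "\<theta> \<le> pi" using \<theta> by (auto simp: closed_segment_eq_real_ivl)
      define \<phi> where "\<phi> = \<gamma> * (- pi / 2 + \<theta>)"
      have w: "- \<i> * (of_real \<rho> * cis \<theta>) = of_real \<rho> * cis (- pi / 2 + \<theta>)"
      proof -
        have "- \<i> * (of_real \<rho> * cis \<theta>) = of_real \<rho> * (cis (- pi / 2) * cis \<theta>)"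
          by (simp add: cis_minus_pi2[symmetric])
        also have "\<dots> = of_real \<rho> * cis (- pi / 2 + \<theta>)" by (simp only: cis_mult)
        finally show ?thesis .
      qed
      have p: "(of_real \<rho> * cis (- pi / 2 + \<theta>)) powr of_real \<gamma> = of_real (\<rho> powr \<gamma>) * cis \<phi>"
        unfolding \<phi>_def by (rule polar_powr) (use \<rho>p \<theta>' pi_gt_zero in linarith)+
      have hz: "h (of_real \<rho> * cis \<theta>) = exp (- \<i> * (of_real \<rho> * cis \<theta> * of_real t)) *
                  exp (- (of_real a * (of_real (\<rho> powr \<gamma>) * cis \<phi>)) * of_real r)"
        unfolding h_def w p ..
      have n1: "norm (exp (- \<i> * (of_real \<rho> * cis \<theta> * of_real t))) = exp (\<rho> * t * sin \<theta>)"
        by (simp add: norm_exp_eq_Re)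
      have n2: "norm (exp (- (of_real a * (of_real (\<rho> powr \<gamma>) * cis \<phi>)) * of_real r)) =
                exp (- (a * \<rho> powr \<gamma> * r * cos \<phi>))"
        by (simp add: norm_exp_eq_Re)
      have "\<rho> * sin \<theta> \<ge> 0" using \<rho> \<theta>' by (simp add: sin_ge_zero)
      then have "t * (\<rho> * sin \<theta>) \<le> 0" using t by (simp add: mult_nonpos_nonneg)
      then have "\<rho> * t * sin \<theta> \<le> 0" by (simp add: mult_ac)
      then have e1: "exp (\<rho> * t * sin \<theta>) \<le> 1" by simp
      have "\<bar>\<phi>\<bar> \<le> \<gamma> * (pi / 2)"
      proof -
        have "\<bar>- pi / 2 + \<theta>\<bar> \<le> pi / 2" using \<theta>' by linarith
        then have "\<gamma> * \<bar>- pi / 2 + \<theta>\<bar> \<le> \<gamma> * (pi / 2)" using g0 by (intro mult_left_mono) auto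
        then show ?thesis unfolding \<phi>_def abs_mult using g0 by simp
      qed
      moreover have "\<gamma> * (pi / 2) \<le> pi" using g1 pi_gt_zero by (simp add: mult_le_cancel_right1)
      ultimately have "cos (\<gamma> * (pi / 2)) \<le> cos \<bar>\<phi>\<bar>"
        by (intro cos_monotone_0_pi_le) auto
      then have cphi: "cos (\<gamma> * (pi / 2)) \<le> cos \<phi>" by simp
      have "a * \<rho> powr \<gamma> * r * cos (\<gamma> * (pi / 2)) \<le> a * \<rho> powr \<gamma> * r * cos \<phi>"
        by (rule mult_left_mono[OF cphi]) (use apos r in simp)
      moreover have eq: "(\<alpha>0 * r) * \<rho> powr \<gamma> = a * \<rho> powr \<gamma> * r * cos (\<gamma> * (pi / 2))"
        unfolding key[symmetric] by (simp only: mult_ac)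
      ultimately have e2: "exp (- (a * \<rho> powr \<gamma> * r * cos \<phi>)) \<le> exp (- (\<alpha>0 * r) * \<rho> powr \<gamma>)"
        by (simp only: mult_minus_left eq exp_le_cancel_iff neg_le_iff_le)
      have "norm (h (of_real \<rho> * cis \<theta>)) = exp (\<rho> * t * sin \<theta>) * exp (- (a * \<rho> powr \<gamma> * r * cos \<phi>))"
        unfolding hz norm_mult n1 n2 ..
      also have "\<dots> \<le> 1 * exp (- (\<alpha>0 * r) * \<rho> powr \<gamma>)"
        by (rule mult_mono[OF e1 e2]) auto
      finally show ?thesis by simp
    qed
    show "((\<lambda>R. R * exp (- (\<alpha>0 * r) * R powr \<gamma>)) \<longlongrightarrow> 0) at_top"
      using a0 r g0 by real_asymp
    show "set_integrable lborel {0..} (\<lambda>\<rho>. h (of_real \<rho>))"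
      unfolding hF set_integrable_def by (rule integrable_mult_indicator[OF _ intF]) simp
    have hm: "h (of_real \<rho> * cis pi) = F (- \<rho>)" for \<rho>
      using hF[of "-\<rho>"] by simp
    show "set_integrable lborel {0..} (\<lambda>\<rho>. h (of_real \<rho> * cis pi))"
      unfolding set_integrable_def by (simp only: hm, rule integrable_mult_indicator[OF _ intFm]) simp
  qed
  have "h (of_real \<rho> * cis pi) = F (- \<rho>)" for \<rho>
    using hF[of "-\<rho>"] by simp
  with sec hF have "(LBINT x:{0..}. F x) = - (LBINT x:{0..}. F (- x))" by simp
  with split show ?thesis unfolding F_def[symmetric] by simp
qed




lemma q_pos:
  fixes c g :: real
  assumes c: "c > 0" and g: "g > 0"
  shows "(LBINT x:{0..}. exp (- c * x powr g)) > 0"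
proof -
  have int: "integrable lborel (\<lambda>x. exp (- c * \<bar>x\<bar> powr g))" by (rule integrable_exp_powr[OF c g])
  have i2: "integrable lborel (\<lambda>x. indicator {0..} x *\<^sub>R exp (- c * \<bar>x\<bar> powr g))"
    by (rule integrable_mult_indicator[OF _ int]) simp
  have i1: "integrable lborel (\<lambda>x. indicator {0..1::real} x * exp (- c))"
    by (intro integrable_mult_left) (simp add: integrable_indicator_iff)
  have "(LINT x|lborel. indicator {0..1::real} x * exp (- c)) \<le> (LINT x|lborel. indicator {0..} x *\<^sub>R exp (- c * \<bar>x\<bar> powr g))"
  proof (rule integral_mono[OF i1 i2])
    fix x :: real
    show "indicator {0..1} x * exp (- c) \<le> indicator {0..} x *\<^sub>R exp (- c * \<bar>x\<bar> powr g)"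
    proof (cases "x \<in> {0..1}")
      case True
      then have "\<bar>x\<bar> powr g \<le> 1" using g by (intro powr_le1) auto
      then have "exp (- c) \<le> exp (- c * \<bar>x\<bar> powr g)" using c by (simp add: mult_le_cancel_left1)
      then show ?thesis using True by simp
    next
      case False
      then show ?thesis by (simp add: indicator_def)
    qed
  qed
  also have "\<dots> = (LBINT x:{0..}. exp (- c * x powr g))"
    unfolding set_lebesgue_integral_def by (intro Bochner_Integration.integral_cong) (auto simp: indicator_def)
  finally have "exp (- c) \<le> (LBINT x:{0..}. exp (- c * x powr g))" by simp
  moreover have "exp (- c) > 0" by simp
  ultimately show ?thesis by linarith
qed




lemma G0_ne:
  fixes \<alpha>0 \<gamma> r :: real
  assumes a0: "\<alpha>0 > 0" and g1: "\<gamma> > 1" and cne: "cos (pi / 2 * \<gamma>) \<noteq> 0" and r: "r > 0"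
  shows "(LINT \<omega>|lborel. exp (- alpha_pl \<alpha>0 \<gamma> \<omega> * complex_of_real r)) \<noteq> 0"
proof
  assume G0: "(LINT \<omega>|lborel. exp (- alpha_pl \<alpha>0 \<gamma> \<omega> * complex_of_real r)) = 0"
  have g0: "\<gamma> > 0" using g1 by simp
  define a where "a = alpha_tilde \<alpha>0 \<gamma>"
  have key: "a * cos (\<gamma> * (pi / 2)) = \<alpha>0"
    using cne unfolding a_def alpha_tilde_def by (simp add: mult.commute)
  define f where "f \<omega> = exp (- alpha_pl \<alpha>0 \<gamma> \<omega> * complex_of_real r)" for \<omega>
  have normf: "norm (f \<omega>) = exp (- (\<alpha>0 * r) * \<bar>\<omega>\<bar> powr \<gamma>)" for \<omega>
    unfolding f_def by (rule norm_exp_alpha[OF cne])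
  have fcont: "continuous_on UNIV f"
    unfolding f_def alpha_pl_def by (intro continuous_intros continuous_on_powr_complex) (auto simp: g0)
  have intf: "integrable lborel f"
  proof (rule Bochner_Integration.integrable_bound[OF integrable_exp_powr[of "\<alpha>0 * r" \<gamma>]])
    show "f \<in> borel_measurable lborel" unfolding measurable_lborel2
      by (rule borel_measurable_continuous_onI[OF fcont])
    show "AE x in lborel. norm (f x) \<le> norm (exp (- (\<alpha>0 * r) * \<bar>x\<bar> powr \<gamma>))"
      by (intro AE_I2) (simp add: normf)
  qed (use a0 r g0 in auto)
  define P where "P = (LBINT x:{0..}. f x)"
  have split: "integral\<^sup>L lborel f = P + (LBINT x:{0..}. f (- x))"
    unfolding P_def by (rule split_real[OF intf])
  have fcnj: "f (- x) = cnj (f x)" for x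
  proof -
    consider "x > 0" | "x = 0" | "x < 0" by linarith
    then show ?thesis
    proof cases
      case 1 then show ?thesis unfolding f_def
        by (simp add: alpha_pl_pos alpha_pl_neg exp_cnj cis_cnj)
    next
      case 2 then show ?thesis unfolding f_def by (simp add: alpha_pl_0)
    next
      case 3
      define y where "y = - x"
      then have "x = - y" "y > 0" using 3 by auto
      then show ?thesis unfolding f_def
        by (simp add: alpha_pl_pos alpha_pl_neg exp_cnj cis_cnj)
    qed
  qed
  have Q: "(LBINT x:{0..}. f (- x)) = cnj P"
    unfolding P_def set_lebesgue_integral_def fcnj complex_cnj_scaleR[symmetric] by (rule Bochner_Integration.integral_cnj)
  have "P + cnj P = 0" using G0 split Q unfolding f_def[symmetric] by simp
  then have ReP: "Re P = 0" unfolding complex_add_cnj by simp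
  define b where "b = of_real (a * r) * cis (\<gamma> * (- pi / 2))"
  have Reb: "Re b = \<alpha>0 * r" unfolding b_def using key by (simp add: mult_ac)
  then have bnz: "b \<noteq> 0" using a0 r by auto
  define A where "A = Arg b"
  have Alt: "\<bar>A\<bar> < pi / 2" unfolding A_def using Reb a0 r Arg_Re_pos[of b] by simp
  have bpol: "b = of_real (norm b) * cis A" unfolding A_def using rcis_cmod_Arg[of b] by (simp add: rcis_def)
  have ReA: "norm b * cos A = \<alpha>0 * r" using arg_cong[OF bpol, of Re] Reb by simp
  have nbpos: "norm b > 0" using bnz by simp
  define \<psi> where "\<psi> = - A / \<gamma>"
  have psile: "\<bar>\<psi>\<bar> \<le> \<bar>A\<bar>"
  proof -
    have "\<bar>\<psi>\<bar> = \<bar>A\<bar> / \<gamma>" unfolding \<psi>_def using g0 by simp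
    also have "\<dots> \<le> \<bar>A\<bar>" using g1 by (simp add: divide_le_eq mult_le_cancel_left1)
    finally show ?thesis .
  qed
  then have psilt: "\<bar>\<psi>\<bar> < pi / 2" using Alt by linarith
  have gpsi: "\<gamma> * \<psi> = - A" unfolding \<psi>_def using g0 by simp
  define h where "h z = exp (- (b * z powr of_real \<gamma>))" for z
  have hf: "h (of_real x) = f x" if "x \<ge> 0" for x
  proof (cases "x = 0")
    case True then show ?thesis unfolding h_def f_def by (simp add: alpha_pl_0)
  next
    case False
    with that have "x > 0" by simp
    then show ?thesis unfolding h_def f_def b_def
      by (simp add: alpha_pl_pos powr_of_real mult_ac a_def)
  qed
  have hpsi: "h (of_real x * cis \<psi>) = of_real (exp (- norm b * x powr \<gamma>))" if "x \<ge> 0" for x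
  proof (cases "x = 0")
    case True then show ?thesis unfolding h_def by simp
  next
    case False
    with that have xp: "x > 0" by simp
    have "(of_real x * cis \<psi>) powr of_real \<gamma> = of_real (x powr \<gamma>) * cis (\<gamma> * \<psi>)"
      by (rule polar_powr) (use xp psilt pi_gt_zero in linarith)+
    then have "b * (of_real x * cis \<psi>) powr of_real \<gamma> = of_real (norm b * x powr \<gamma>)"
      unfolding gpsi by (subst bpol) (simp add: mult_ac cis_mult)
    then show ?thesis unfolding h_def by (simp add: exp_of_real[symmetric])
  qed
  have sec: "(LBINT \<rho>:{0..}. h (of_real \<rho>)) = cis \<psi> * (LBINT \<rho>:{0..}. h (of_real \<rho> * cis \<psi>))"
  proof (rule sector[where S="{z. Re z \<ge> 0}" and B="\<lambda>\<rho>. exp (- (\<alpha>0 * r) * \<rho> powr \<gamma>)"])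
    show "convex {z. Re z \<ge> 0}" by (rule convex_halfspace_Re_ge)
    show "of_real \<rho> * cis \<theta> \<in> {z. 0 \<le> Re z}" if "0 \<le> \<rho>" "\<theta> \<in> closed_segment 0 \<psi>" for \<rho> \<theta>
    proof -
      have "\<bar>\<theta>\<bar> \<le> \<bar>\<psi>\<bar>" using that(2) by (auto simp: closed_segment_eq_real_ivl split: if_splits)
      then have "cos \<theta> \<ge> 0" using psilt by (intro cos_ge_zero) linarith+
      then show ?thesis using that(1) by simp
    qed
    show "continuous_on {z. 0 \<le> Re z} h" unfolding h_def
      by (intro continuous_intros continuous_on_powr_complex) (auto simp: g0)
    show "h field_differentiable at z" if "z \<in> {z. 0 \<le> Re z}" "z \<noteq> 0" for z
    proof -
      have "z \<notin> \<real>\<^sub>\<le>\<^sub>0" using that by (auto simp: complex_nonpos_Reals_iff complex_eq_iff)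
      then have "h analytic_on {z}" unfolding h_def by (intro analytic_intros) auto
      then show ?thesis by (rule analytic_on_imp_differentiable_at) simp
    qed
    show "norm (h (of_real \<rho> * cis \<theta>)) \<le> exp (- (\<alpha>0 * r) * \<rho> powr \<gamma>)"
      if \<rho>: "0 \<le> \<rho>" and \<theta>: "\<theta> \<in> closed_segment 0 \<psi>" for \<rho> \<theta>
    proof (cases "\<rho> = 0")
      case True then show ?thesis by (simp add: h_def)
    next
      case False
      with \<rho> have \<rho>p: "\<rho> > 0" by simp
      have th: "\<bar>\<theta>\<bar> \<le> \<bar>\<psi>\<bar>" using \<theta> by (auto simp: closed_segment_eq_real_ivl split: if_splits)
      have p: "(of_real \<rho> * cis \<theta>) powr of_real \<gamma> = of_real (\<rho> powr \<gamma>) * cis (\<gamma> * \<theta>)"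
        by (rule polar_powr) (use \<rho>p th psilt pi_gt_zero in linarith)+
      have eq: "b * (of_real \<rho> * cis \<theta>) powr of_real \<gamma> = of_real (norm b * \<rho> powr \<gamma>) * cis (A + \<gamma> * \<theta>)"
        unfolding p by (subst bpol) (simp add: mult_ac cis_mult)
      have nh: "norm (h (of_real \<rho> * cis \<theta>)) = exp (- (norm b * \<rho> powr \<gamma> * cos (A + \<gamma> * \<theta>)))"
        unfolding h_def eq by (simp add: norm_exp_eq_Re)
      have "\<bar>A + \<gamma> * \<theta>\<bar> \<le> \<bar>A\<bar>"
      proof (cases "A \<ge> 0")
        case True
        then have "\<psi> \<le> 0" unfolding \<psi>_def using g0 by simp
        then have "\<psi> \<le> \<theta>" "\<theta> \<le> 0" using \<theta> by (auto simp: closed_segment_eq_real_ivl split: if_splits)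
        then have "\<gamma> * \<psi> \<le> \<gamma> * \<theta>" "\<gamma> * \<theta> \<le> 0" using g0 by (auto intro: mult_left_mono simp: mult_nonneg_nonpos)
        then show ?thesis using gpsi True by linarith
      next
        case False
        then have "\<psi> \<ge> 0" unfolding \<psi>_def using g0 by (simp add: divide_nonpos_pos)
        then have "0 \<le> \<theta>" "\<theta> \<le> \<psi>" using \<theta> by (auto simp: closed_segment_eq_real_ivl split: if_splits)
        then have "\<gamma> * \<theta> \<le> \<gamma> * \<psi>" "0 \<le> \<gamma> * \<theta>" using g0 by (auto intro: mult_left_mono)
        then show ?thesis using gpsi False by linarith
      qed
      then have "cos \<bar>A\<bar> \<le> cos \<bar>A + \<gamma> * \<theta>\<bar>" using Alt by (intro cos_monotone_0_pi_le) auto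
      then have "cos A \<le> cos (A + \<gamma> * \<theta>)" by simp
      then have "norm b * cos A * \<rho> powr \<gamma> \<le> norm b * cos (A + \<gamma> * \<theta>) * \<rho> powr \<gamma>"
        using nbpos by (intro mult_right_mono mult_left_mono) auto
      then have "(\<alpha>0 * r) * \<rho> powr \<gamma> \<le> norm b * \<rho> powr \<gamma> * cos (A + \<gamma> * \<theta>)"
        unfolding ReA by (simp add: mult_ac)
      then show ?thesis unfolding nh by simp
    qed
    show "((\<lambda>R. R * exp (- (\<alpha>0 * r) * R powr \<gamma>)) \<longlongrightarrow> 0) at_top"
      using a0 r g0 by real_asymp
    show "set_integrable lborel {0..} (\<lambda>\<rho>. h (of_real \<rho>))"
    proof -
      have "integrable lborel (\<lambda>x. indicator {0..} x *\<^sub>R f x)"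
        by (rule integrable_mult_indicator[OF _ intf]) simp
      also have "?this \<longleftrightarrow> integrable lborel (\<lambda>x. indicator {0..} x *\<^sub>R h (of_real x))"
        by (intro Bochner_Integration.integrable_cong) (auto simp: indicator_def hf)
      finally show ?thesis unfolding set_integrable_def .
    qed
    show "set_integrable lborel {0..} (\<lambda>\<rho>. h (of_real \<rho> * cis \<psi>))"
    proof -
      have "integrable lborel (\<lambda>x. complex_of_real (exp (- norm b * \<bar>x\<bar> powr \<gamma>)))"
        unfolding complex_of_real_integrable_eq by (rule integrable_exp_powr[OF nbpos g0])
      then have "integrable lborel (\<lambda>x. indicator {0..} x *\<^sub>R complex_of_real (exp (- norm b * \<bar>x\<bar> powr \<gamma>)))"
        by (rule integrable_mult_indicator[rotated]) simp
      also have "?this \<longleftrightarrow> integrable lborel (\<lambda>x. indicator {0..} x *\<^sub>R h (of_real x * cis \<psi>))"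
        by (intro Bochner_Integration.integrable_cong) (auto simp: indicator_def hpsi)
      finally show ?thesis unfolding set_integrable_def .
    qed
  qed
  have "P = (LBINT \<rho>:{0..}. h (of_real \<rho>))"
    unfolding P_def by (rule set_lebesgue_integral_cong) (auto simp: hf)
  also have "\<dots> = cis \<psi> * (LBINT \<rho>:{0..}. complex_of_real (exp (- norm b * \<rho> powr \<gamma>)))"
    unfolding sec by (subst set_lebesgue_integral_cong[where g="\<lambda>\<rho>. complex_of_real (exp (- norm b * \<rho> powr \<gamma>))"]) (auto simp: hpsi)
  also have "\<dots> = cis \<psi> * of_real (LBINT \<rho>:{0..}. exp (- norm b * \<rho> powr \<gamma>))"
    by (simp add: set_integral_complex_of_real)
  finally have "Re P = cos \<psi> * (LBINT \<rho>:{0..}. exp (- norm b * \<rho> powr \<gamma>))" by simp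
  moreover have "cos \<psi> > 0" using psilt by (intro cos_gt_zero_pi) linarith+
  moreover have "(LBINT \<rho>:{0..}. exp (- norm b * \<rho> powr \<gamma>)) > 0" by (rule q_pos[OF nbpos g0])
  ultimately have "Re P > 0" by simp
  with ReP show False by simp
qed




lemma dir2:
  fixes \<alpha>0 \<gamma> r :: real
  assumes a0: "\<alpha>0 > 0" and g1: "\<gamma> > 1" and cne: "cos (pi / 2 * \<gamma>) \<noteq> 0" and r: "r > 0"
  shows "\<exists>t<0. (LINT \<omega>|lborel. exp (- \<i> * complex_of_real (\<omega> * t)) * exp (- alpha_pl \<alpha>0 \<gamma> \<omega> * complex_of_real r)) \<noteq> 0"
proof (rule ccontr)
  assume "\<not> ?thesis"
  then have Z: "\<And>t. t < 0 \<Longrightarrow> (LINT \<omega>|lborel. exp (- \<i> * complex_of_real (\<omega> * t)) * exp (- alpha_pl \<alpha>0 \<gamma> \<omega> * complex_of_real r)) = 0"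
    by auto
  have g0: "\<gamma> > 0" using g1 by simp
  define F where "F t \<omega> = exp (- \<i> * complex_of_real (\<omega> * t)) * exp (- alpha_pl \<alpha>0 \<gamma> \<omega> * complex_of_real r)" for t \<omega>
  define w where "w \<omega> = exp (- (\<alpha>0 * r) * \<bar>\<omega>\<bar> powr \<gamma>)" for \<omega>
  have normF: "norm (F t \<omega>) = w \<omega>" for t \<omega>
    unfolding F_def w_def norm_mult norm_exp_alpha[OF cne] by (simp add: norm_exp_eq_Re)
  have meas: "F t \<in> borel_measurable lborel" for t
  proof -
    have "continuous_on UNIV (F t)"
      unfolding F_def alpha_pl_def by (intro continuous_intros continuous_on_powr_complex) (auto simp: g0)
    then show ?thesis unfolding measurable_lborel2 by (rule borel_measurable_continuous_onI)
  qed
  define s where "s n = - inverse (real (Suc n))" for n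
  have s0: "s \<longlonglongrightarrow> 0" unfolding s_def using tendsto_minus[OF LIMSEQ_inverse_real_of_nat] by simp
  have lim: "(\<lambda>n. integral\<^sup>L lborel (F (s n))) \<longlonglongrightarrow> integral\<^sup>L lborel (F 0)"
  proof (rule integral_dominated_convergence[where w=w])
    show "integrable lborel w" unfolding w_def by (rule integrable_exp_powr) (use a0 r g0 in auto)
    show "AE x in lborel. (\<lambda>n. F (s n) x) \<longlonglongrightarrow> F 0 x"
    proof (rule AE_I2)
      fix x :: real
      have "(\<lambda>n. exp (- \<i> * complex_of_real (x * s n)) * exp (- alpha_pl \<alpha>0 \<gamma> x * complex_of_real r))
              \<longlonglongrightarrow> exp (- \<i> * complex_of_real (x * 0)) * exp (- alpha_pl \<alpha>0 \<gamma> x * complex_of_real r)"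
        by (intro tendsto_intros s0)
      then show "(\<lambda>n. F (s n) x) \<longlonglongrightarrow> F 0 x" unfolding F_def .
    qed
    show "AE x in lborel. norm (F (s n) x) \<le> w x" for n by (intro AE_I2) (simp add: normF)
  qed (use meas in auto)
  have "integral\<^sup>L lborel (F (s n)) = 0" for n
    unfolding F_def by (rule Z) (simp add: s_def)
  then have "(\<lambda>n. integral\<^sup>L lborel (F (s n))) = (\<lambda>n. 0)" by (rule ext)
  with lim have "(\<lambda>n. 0::complex) \<longlonglongrightarrow> integral\<^sup>L lborel (F 0)" by simp
  then have "integral\<^sup>L lborel (F 0) = 0"
    using LIMSEQ_unique[OF _ tendsto_const] by metis
  moreover have "integral\<^sup>L lborel (F 0) = (LINT \<omega>|lborel. exp (- alpha_pl \<alpha>0 \<gamma> \<omega> * complex_of_real r))"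
    unfolding F_def by simp
  ultimately show False using G0_ne[OF a0 g1 cne r] by simp
qed




theorem theorem2:
  fixes c0 \<alpha>0 \<gamma> :: real
  assumes "c0 > 0" and "\<alpha>0 > 0" and "\<gamma> > 0"
    and "\<not> (\<exists>k::int. \<gamma> = 2 * of_int k + 1)"
  shows "(\<forall>x::real^3. x \<noteq> 0 \<longrightarrow> (\<forall>t::real. t < 0 \<longrightarrow> kernel_K \<alpha>0 \<gamma> x t = 0))
           \<longleftrightarrow> \<gamma> \<in> {0<..<1}"
proof -
  have c: "cos (pi / 2 * \<gamma>) \<noteq> 0" by (rule cos_gamma_ne0[OF assms(4)])
  have Kz: "kernel_K \<alpha>0 \<gamma> x t = 0 \<longleftrightarrow>
     (LINT \<omega>|lborel. exp (- \<i> * complex_of_real (\<omega> * t)) * exp (- alpha_pl \<alpha>0 \<gamma> \<omega> * complex_of_real (norm x))) = 0"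
    for x t
    unfolding kernel_K_def inv_fourier_def by simp
  show ?thesis
  proof
    assume H: "\<forall>x::real^3. x \<noteq> 0 \<longrightarrow> (\<forall>t::real. t < 0 \<longrightarrow> kernel_K \<alpha>0 \<gamma> x t = 0)"
    show "\<gamma> \<in> {0<..<1}"
    proof (rule ccontr)
      assume "\<gamma> \<notin> {0<..<1}"
      then have "\<gamma> \<ge> 1" using assms(3) by auto
      moreover have "\<gamma> \<noteq> 1" using assms(4) by (metis add_0 mult_zero_right of_int_0)
      ultimately have g1: "\<gamma> > 1" by simp
      obtain t where t: "t < 0" and
        nz: "(LINT \<omega>|lborel. exp (- \<i> * complex_of_real (\<omega> * t)) * exp (- alpha_pl \<alpha>0 \<gamma> \<omega> * complex_of_real 1)) \<noteq> 0"
        using dir2[OF assms(2) g1 c, of 1] by auto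
      define x :: "real^3" where "x = axis 1 1"
      have nx: "norm x = 1" unfolding x_def by simp
      then have "x \<noteq> 0" by auto
      with H t have "kernel_K \<alpha>0 \<gamma> x t = 0" by blast
      with Kz nx nz show False by simp
    qed
  next
    assume g: "\<gamma> \<in> {0<..<1}"
    show "\<forall>x::real^3. x \<noteq> 0 \<longrightarrow> (\<forall>t::real. t < 0 \<longrightarrow> kernel_K \<alpha>0 \<gamma> x t = 0)"
    proof (intro allI impI)
      fix x :: "real^3" and t :: real
      assume "x \<noteq> 0" "t < 0"
      then have "norm x > 0" by simp
      with g \<open>t < 0\<close> assms(2) show "kernel_K \<alpha>0 \<gamma> x t = 0"
        unfolding Kz by (intro dir1) auto
    qed
  qed
qed



end
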